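(* Every folded ribbon $3$-stick unknot $\mathcal{U}_{w,F}$ with ribbon linking number $\operatorname{Lk}(\mathcal{U}_{w,F})=\pm1$ satisfies $\operatorname{Rib}(\mathcal{U}_{w,F})\ge\sqrt{3}$; hence the minimum folded ribbonlength of such unknots is bounded below by $\sqrt3$, and the minimum value is achieved when $\mathcal{U}$ is an equilateral triangle.
   Context: A folded ribbon $3$-stick unknot corresponds to an unknot diagram $\mathcal{U}$ with three edges forming a non-degenerate triangle. For width $w>0$, $\mathcal{U}_{w,F}$ is a flat strip of width $w$ centred on $\mathcal{U}$ (boundary parallel to and at distance $w/2$ from each edge), folded at each vertex along a fold line through the vertex perpendicular to the bisector of the angle there; it is a piecewise-linear immersion of a Möbius band whose only singularities are the pairwise disjoint fold lines; the folding information $F$ records which layer lies on top at each fold. $\operatorname{Rib}(\mathcal{U}_{w,F})=\operatorname{Len}(\mathcal{U})/w$. The ribbon linking number $\operatorname{Lk}(\mathcal{U}_{w,F})$ is one half the sum of the signs (right-hand rule) of the crossings between the oriented diagram and the ribbon's boundary curve (oriented parallel to the diagram). *)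

theory Defs
  imports "HOL-Analysis.Analysis"
begin

(* A 3-stick unknot diagram is given
   by its vertices V 0, V 1, V 2 (only these values of V matter); edge i runs from
   V i to V (nxt i), indices taken mod 3. *)

definition nxt :: "nat \<Rightarrow> nat" where "nxt i = Suc i mod 3"
definition prv :: "nat \<Rightarrow> nat" where "prv i = (i + 2) mod 3"

(* planar cross product; positive iff b is counterclockwise from a *)
definition cross :: "complex \<Rightarrow> complex \<Rightarrow> real" where
  "cross a b = Im (cnj a * b)"

definition edir :: "(nat \<Rightarrow> complex) \<Rightarrow> nat \<Rightarrow> complex" where
  "edir V i = (V (nxt i) - V i) / complex_of_real (cmod (V (nxt i) - V i))"

(* direction of the fold line at vertex i: the line through V i perpendicular to
   the bisector of the (interior) angle at V i *)
definition fdir :: "(nat \<Rightarrow> complex) \<Rightarrow> nat \<Rightarrow> complex" where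
  "fdir V i = edir V (prv i) + edir V i"

(* the fold line at vertex i: the part of that line lying in the ribbon of width w
   (i.e. at distance \<le> w/2 from the edge lines through V i) *)
definition fold_line :: "(nat \<Rightarrow> complex) \<Rightarrow> real \<Rightarrow> nat \<Rightarrow> complex set" where
  "fold_line V w i =
     {V i + complex_of_real s * fdir V i | s. \<bar>s * cross (edir V i) (fdir V i)\<bar> \<le> w / 2}"

(* endpoint of the fold line at vertex i lying on the boundary line of the strip of
   edge j on side \<sigma> (\<sigma> = 1: left of edge j, \<sigma> = -1: right of edge j) *)
definition fold_end :: "(nat \<Rightarrow> complex) \<Rightarrow> real \<Rightarrow> nat \<Rightarrow> nat \<Rightarrow> real \<Rightarrow> complex" where
  "fold_end V w i j \<sigma> =
     V i + complex_of_real (\<sigma> * w / (2 * cross (edir V j) (fdir V i))) * fdir V i"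

(* the piece of the ribbon boundary running along edge k on side \<sigma>: parallel to
   edge k at distance w/2, between the fold lines at V k and V (nxt k) *)
definition bdry_seg :: "(nat \<Rightarrow> complex) \<Rightarrow> real \<Rightarrow> nat \<Rightarrow> real \<Rightarrow> complex set" where
  "bdry_seg V w k \<sigma> = closed_segment (fold_end V w k k \<sigma>) (fold_end V w (nxt k) k \<sigma>)"

definition diag_edge :: "(nat \<Rightarrow> complex) \<Rightarrow> nat \<Rightarrow> complex set" where
  "diag_edge V j = closed_segment (V j) (V (nxt j))"

(* folding information: F i = True iff at the fold at V i the outgoing layer (strip of
   edge i) lies on top of the incoming layer (strip of edge prv i).
   over F j k: the strip of edge k lies above the strip of edge j (j \<noteq> k); the
   layering of two strips is determined by the fold at their common vertex. *)
definition over :: "(nat \<Rightarrow> bool) \<Rightarrow> nat \<Rightarrow> nat \<Rightarrow> bool" where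
  "over F j k = (if k = nxt j then F k else \<not> F j)"

(* sign (right-hand rule) of a crossing between diagram edge j and a boundary piece
   along edge k, both oriented parallel to the diagram: sign of cross(over, under) *)
definition crossing_sign :: "(nat \<Rightarrow> complex) \<Rightarrow> (nat \<Rightarrow> bool) \<Rightarrow> nat \<Rightarrow> nat \<Rightarrow> real" where
  "crossing_sign V F j k =
     (if over F j k then sgn (cross (edir V k) (edir V j))
      else sgn (cross (edir V j) (edir V k)))"

definition ribbon_Lk :: "(nat \<Rightarrow> complex) \<Rightarrow> real \<Rightarrow> (nat \<Rightarrow> bool) \<Rightarrow> real" where
  "ribbon_Lk V w F =
     (1/2) * (\<Sum>j<3. \<Sum>k\<in>{..<3} - {j}. \<Sum>\<sigma>\<in>{-1, 1::real}.
        if diag_edge V j \<inter> bdry_seg V w k \<sigma> \<noteq> {} then crossing_sign V F j k else 0)"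

definition folded_ribbon_3stick :: "(nat \<Rightarrow> complex) \<Rightarrow> real \<Rightarrow> bool" where
  "folded_ribbon_3stick V w \<longleftrightarrow>
     \<not> collinear {V 0, V 1, V 2} \<and> w > 0 \<and>
     (\<forall>i<3. \<forall>j<3. i \<noteq> j \<longrightarrow> fold_line V w i \<inter> fold_line V w j = {})"

definition diag_len :: "(nat \<Rightarrow> complex) \<Rightarrow> real" where
  "diag_len V = (\<Sum>i<3. cmod (V (nxt i) - V i))"

definition ribbonlength :: "(nat \<Rightarrow> complex) \<Rightarrow> real \<Rightarrow> real" where
  "ribbonlength V w = diag_len V / w"

definition equilateral :: "(nat \<Rightarrow> complex) \<Rightarrow> bool" where
  "equilateral V \<longleftrightarrow> V 0 \<noteq> V 1 \<and> cmod (V 1 - V 0) = cmod (V 2 - V 1)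
     \<and> cmod (V 2 - V 1) = cmod (V 0 - V 2)"

end

theory Submission
  imports Defs
begin

lemma collinear_cross: "collinear {x, y, z::complex} \<longleftrightarrow> cross (x - y) (z - y) = 0"
proof -
  have "collinear {x, y, z} \<longleftrightarrow> collinear {0, x - y, z - y}"
    by (auto simp add: collinear_def)
  also have "\<dots> \<longleftrightarrow> (z - y) / (x - y) \<in> \<real>" by (rule collinear_iff_Reals)
  also have "\<dots> \<longleftrightarrow> cross (x - y) (z - y) = 0"
    by (auto simp add: complex_is_Real_iff cross_def Im_divide algebra_simps)
  finally show ?thesis .
qed

lemma cross_scale: "cross (u*x) (u*y) = (cmod u)^2 * cross x y"
  unfolding cross_def cmod_power2 by (simp add: algebra_simps power2_eq_square)

lemma cross_cnj: "cross (cnj x) (cnj y) = - cross x y"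
  by (simp add: cross_def)

lemma cross_lin: "cross e (x + y) = cross e x + cross e y"
  "cross e (complex_of_real r * x) = r * cross e x"
  "cross e (x - y) = cross e x - cross e y"
  by (simp_all add: cross_def algebra_simps)

lemma seg_map:
  fixes g :: "complex \<Rightarrow> complex"
  assumes "\<And>x y u. g ((1-u) *\<^sub>R x + u *\<^sub>R y) = (1-u) *\<^sub>R g x + u *\<^sub>R g y"
  shows "closed_segment (g x) (g y) = g ` closed_segment x y"
proof
  show "closed_segment (g x) (g y) \<subseteq> g ` closed_segment x y"
  proof
    fix z assume "z \<in> closed_segment (g x) (g y)"
    then obtain u where u: "0 \<le> u" "u \<le> 1" "z = (1-u) *\<^sub>R g x + u *\<^sub>R g y"
      by (auto simp: in_segment)
    then have "z = g ((1-u) *\<^sub>R x + u *\<^sub>R y)" by (simp add: assms)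
    moreover have "(1-u) *\<^sub>R x + u *\<^sub>R y \<in> closed_segment x y" using u by (auto simp: in_segment)
    ultimately show "z \<in> g ` closed_segment x y" by blast
  qed
  show "g ` closed_segment x y \<subseteq> closed_segment (g x) (g y)"
  proof
    fix z assume "z \<in> g ` closed_segment x y"
    then obtain u where u: "0 \<le> u" "u \<le> 1" "z = g ((1-u) *\<^sub>R x + u *\<^sub>R y)"
      by (auto simp: in_segment)
    then show "z \<in> closed_segment (g x) (g y)" by (auto simp: in_segment assms)
  qed
qed

lemma aff_lin: "(a::complex) * ((1-u) *\<^sub>R x + u *\<^sub>R y) + b = (1-u) *\<^sub>R (a*x+b) + u *\<^sub>R (a*y+b)"
  by (simp add: scaleR_conv_of_real algebra_simps)

lemma cnj_lin: "cnj ((1-u) *\<^sub>R x + u *\<^sub>R y) = (1-u) *\<^sub>R cnj x + u *\<^sub>R cnj y"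
  by (simp add: scaleR_conv_of_real)

lemma seg_aff: "closed_segment ((a::complex)*x+b) (a*y+b) = (\<lambda>z. a*z+b) ` closed_segment x y"
  using seg_map[of "\<lambda>z. a*z+b"] aff_lin by blast

lemma seg_cnj: "closed_segment (cnj x) (cnj y) = cnj ` closed_segment x y"
  using seg_map[of cnj] cnj_lin by blast

lemma inj_aff: "a \<noteq> (0::complex) \<Longrightarrow> inj (\<lambda>z. a*z+b)"
  by (auto simp: inj_on_def)

lemma unit_sgn: "a \<noteq> 0 \<Longrightarrow> cmod (a / complex_of_real (cmod a)) = 1"
  by (simp add: norm_divide)

lemma cross_unit: "cmod u = 1 \<Longrightarrow> cross (u*x) (u*y) = cross x y"
  by (simp add: cross_scale)

lemma edir_aff: "a \<noteq> 0 \<Longrightarrow> edir (\<lambda>i. a * V i + b) i = (a / complex_of_real (cmod a)) * edir V i"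
proof -
  assume a: "a \<noteq> 0"
  have "a * V (nxt i) + b - (a * V i + b) = a * (V (nxt i) - V i)" by (simp add: algebra_simps)
  then show ?thesis using a by (simp add: edir_def norm_mult)
qed

lemma fdir_aff: "a \<noteq> 0 \<Longrightarrow> fdir (\<lambda>i. a * V i + b) i = (a / complex_of_real (cmod a)) * fdir V i"
  by (simp add: fdir_def edir_aff ring_distribs)

lemma fold_end_aff: "a \<noteq> 0 \<Longrightarrow>
  fold_end (\<lambda>i. a * V i + b) (cmod a * w) i j \<sigma> = a * fold_end V w i j \<sigma> + b"
proof -
  assume a: "a \<noteq> 0"
  show ?thesis
    unfolding fold_end_def fdir_aff[OF a] edir_aff[OF a] cross_unit[OF unit_sgn[OF a]]
    using a by (simp add: field_simps)
qed

lemma bdry_aff: "a \<noteq> 0 \<Longrightarrow>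
  bdry_seg (\<lambda>i. a * V i + b) (cmod a * w) k \<sigma> = (\<lambda>z. a*z+b) ` bdry_seg V w k \<sigma>"
  by (simp add: bdry_seg_def fold_end_aff seg_aff)

lemma diag_aff: "diag_edge (\<lambda>i. a * V i + b) j = (\<lambda>z. a*z+b) ` diag_edge V j"
  by (simp add: diag_edge_def seg_aff)

lemma csign_aff: "a \<noteq> 0 \<Longrightarrow> crossing_sign (\<lambda>i. a * V i + b) F j k = crossing_sign V F j k"
proof -
  assume a: "a \<noteq> 0"
  show ?thesis
    unfolding crossing_sign_def edir_aff[OF a] cross_unit[OF unit_sgn[OF a]] ..
qed

lemma Lk_aff: "a \<noteq> 0 \<Longrightarrow> ribbon_Lk (\<lambda>i. a * V i + b) (cmod a * w) F = ribbon_Lk V w F"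
proof -
  assume a: "a \<noteq> 0"
  show ?thesis
    unfolding ribbon_Lk_def csign_aff[OF a] bdry_aff[OF a] diag_aff image_Int[OF inj_aff[OF a], symmetric] image_is_empty
    by (rule refl)
qed

lemma disj_mono: "A' \<subseteq> A \<Longrightarrow> B' \<subseteq> B \<Longrightarrow> A \<inter> B = {} \<Longrightarrow> A' \<inter> B' = {}"
  by blast

lemma inj_disj: "inj f \<Longrightarrow> A \<inter> B = {} \<Longrightarrow> f ` A \<inter> f ` B = {}"
  by (metis image_Int image_empty)

lemma fold_line_aff: "a \<noteq> 0 \<Longrightarrow>
  fold_line (\<lambda>i. a * V i + b) (cmod a * w) i \<subseteq> (\<lambda>z. a*z+b) ` fold_line V w i"
proof
  fix z assume a: "a \<noteq> 0" and "z \<in> fold_line (\<lambda>i. a * V i + b) (cmod a * w) i"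
  then obtain s where s: "z = a * V i + b + complex_of_real s * ((a / complex_of_real (cmod a)) * fdir V i)"
     "\<bar>s * cross (edir V i) (fdir V i)\<bar> \<le> cmod a * w / 2"
    unfolding fold_line_def fdir_aff[OF a] edir_aff[OF a] cross_unit[OF unit_sgn[OF a]] by blast
  have ca: "cmod a > 0" using a by simp
  have "z = a * (V i + complex_of_real (s / cmod a) * fdir V i) + b"
    using s(1) a by (simp add: field_simps)
  moreover have "\<bar>(s / cmod a) * cross (edir V i) (fdir V i)\<bar> \<le> w / 2"
    using s(2) ca by (simp add: abs_mult abs_divide field_simps)
  ultimately show "z \<in> (\<lambda>z. a*z+b) ` fold_line V w i"
    unfolding fold_line_def by blast
qed

lemma folded_aff: "a \<noteq> 0 \<Longrightarrow> folded_ribbon_3stick V w \<Longrightarrow>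
  folded_ribbon_3stick (\<lambda>i. a * V i + b) (cmod a * w)"
proof -
  assume a: "a \<noteq> 0" and f: "folded_ribbon_3stick V w"
  have f': "\<not> collinear {V 0, V 1, V 2} \<and> w > 0 \<and>
     (\<forall>i<3. \<forall>j<3. i \<noteq> j \<longrightarrow> fold_line V w i \<inter> fold_line V w j = {})"
    using f unfolding folded_ribbon_3stick_def .
  have c: "cross (a * V 0 + b - (a * V 1 + b)) (a * V 2 + b - (a * V 1 + b))
      = (cmod a)^2 * cross (V 0 - V 1) (V 2 - V 1)"
  proof -
    have "a * V 0 + b - (a * V 1 + b) = a * (V 0 - V 1)" "a * V 2 + b - (a * V 1 + b) = a * (V 2 - V 1)"
      by (simp_all add: algebra_simps)
    then show ?thesis by (simp only: cross_scale)
  qed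
  have nc: "\<not> collinear {V 0, V 1, V 2}" using f' by (rule conjunct1)
  have "cross (V 0 - V 1) (V 2 - V 1) \<noteq> 0" using nc unfolding collinear_cross .
  then have 1: "\<not> collinear {a * V 0 + b, a * V 1 + b, a * V 2 + b}"
    using a unfolding collinear_cross c by simp
  have 2: "cmod a * w > 0" using conjunct1[OF conjunct2[OF f']] a by simp
  have 3: "fold_line (\<lambda>i. a * V i + b) (cmod a * w) i \<inter> fold_line (\<lambda>i. a * V i + b) (cmod a * w) j = {}"
    if "i < 3" "j < 3" "i \<noteq> j" for i j
  proof -
    have "fold_line V w i \<inter> fold_line V w j = {}" using f' that by blast
    then have "(\<lambda>z. a*z+b) ` fold_line V w i \<inter> (\<lambda>z. a*z+b) ` fold_line V w j = {}"
      by (rule inj_disj[OF inj_aff[OF a]])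
    then show ?thesis by (rule disj_mono[OF fold_line_aff[OF a] fold_line_aff[OF a]])
  qed
  show ?thesis unfolding folded_ribbon_3stick_def
  proof (intro conjI allI impI)
    fix i j :: nat assume "i < 3" "j < 3" "i \<noteq> j"
    then show "fold_line (\<lambda>i. a * V i + b) (cmod a * w) i \<inter> fold_line (\<lambda>i. a * V i + b) (cmod a * w) j = {}"
      by (rule 3)
  qed (rule 1, rule 2)
qed

lemma len_aff: "diag_len (\<lambda>i. a * V i + b) = cmod a * diag_len V"
proof -
  have "\<And>i. cmod (a * V (nxt i) + b - (a * V i + b)) = cmod a * cmod (V (nxt i) - V i)"
  proof -
    fix i
    have "a * V (nxt i) + b - (a * V i + b) = a * (V (nxt i) - V i)" by (simp add: algebra_simps)
    then show "cmod (a * V (nxt i) + b - (a * V i + b)) = cmod a * cmod (V (nxt i) - V i)"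
      by (simp only: norm_mult)
  qed
  then show ?thesis by (simp add: diag_len_def sum_distrib_left)
qed

lemma riblen_aff: "a \<noteq> 0 \<Longrightarrow> ribbonlength (\<lambda>i. a * V i + b) (cmod a * w) = ribbonlength V w"
  by (simp add: ribbonlength_def len_aff)

lemma edir_cnj: "edir (\<lambda>i. cnj (V i)) i = cnj (edir V i)"
proof -
  have "cnj (V (nxt i)) - cnj (V i) = cnj (V (nxt i) - V i)" by simp
  then show ?thesis unfolding edir_def by (simp only: complex_mod_cnj complex_cnj_divide complex_cnj_complex_of_real)
qed

lemma fdir_cnj: "fdir (\<lambda>i. cnj (V i)) i = cnj (fdir V i)"
  by (simp add: fdir_def edir_cnj)

lemma fold_end_cnj: "fold_end (\<lambda>i. cnj (V i)) w i j \<sigma> = cnj (fold_end V w i j (-\<sigma>))"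
  unfolding fold_end_def fdir_cnj edir_cnj cross_cnj by simp

lemma bdry_cnj: "bdry_seg (\<lambda>i. cnj (V i)) w k \<sigma> = cnj ` bdry_seg V w k (-\<sigma>)"
  by (simp add: bdry_seg_def fold_end_cnj seg_cnj)

lemma diag_cnj: "diag_edge (\<lambda>i. cnj (V i)) j = cnj ` diag_edge V j"
  by (simp add: diag_edge_def seg_cnj)

lemma csign_cnj: "crossing_sign (\<lambda>i. cnj (V i)) F j k = - crossing_sign V F j k"
  unfolding crossing_sign_def edir_cnj cross_cnj by (simp add: sgn_minus)

lemma Lk_cnj: "ribbon_Lk (\<lambda>i. cnj (V i)) w F = - ribbon_Lk V w F"
proof -
  have inj: "inj cnj" by (auto simp: inj_on_def)
  have e: "\<And>j k \<sigma>. (diag_edge (\<lambda>i. cnj (V i)) j \<inter> bdry_seg (\<lambda>i. cnj (V i)) w k \<sigma> \<noteq> {})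
     = (diag_edge V j \<inter> bdry_seg V w k (-\<sigma>) \<noteq> {})"
    unfolding diag_cnj bdry_cnj image_Int[OF inj, symmetric] image_is_empty by (rule refl)
  have "\<And>j k. (\<Sum>\<sigma>\<in>{-1, 1::real}. if diag_edge (\<lambda>i. cnj (V i)) j \<inter> bdry_seg (\<lambda>i. cnj (V i)) w k \<sigma> \<noteq> {}
        then crossing_sign (\<lambda>i. cnj (V i)) F j k else 0)
     = - (\<Sum>\<sigma>\<in>{-1, 1::real}. if diag_edge V j \<inter> bdry_seg V w k \<sigma> \<noteq> {}
        then crossing_sign V F j k else 0)"
    unfolding e csign_cnj by simp
  note h = this
  show ?thesis unfolding ribbon_Lk_def h sum_negf by (rule mult_minus_right)
qed

lemma fold_line_cnj: "fold_line (\<lambda>i. cnj (V i)) w i \<subseteq> cnj ` fold_line V w i"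
proof
  fix z assume "z \<in> fold_line (\<lambda>i. cnj (V i)) w i"
  then obtain s where s: "z = cnj (V i) + complex_of_real s * cnj (fdir V i)"
     "\<bar>s * cross (edir V i) (fdir V i)\<bar> \<le> w / 2"
    unfolding fold_line_def fdir_cnj edir_cnj cross_cnj mult_minus_right abs_minus by blast
  then have e: "z = cnj (V i + complex_of_real s * fdir V i)" by simp
  have m: "V i + complex_of_real s * fdir V i \<in> fold_line V w i"
    unfolding fold_line_def using s(2) by blast
  show "z \<in> cnj ` fold_line V w i" by (rule image_eqI[where f=cnj, OF e m])
qed

lemma folded_cnj: "folded_ribbon_3stick V w \<Longrightarrow> folded_ribbon_3stick (\<lambda>i. cnj (V i)) w"
proof -
  assume f: "folded_ribbon_3stick V w"
  have f': "\<not> collinear {V 0, V 1, V 2} \<and> w > 0 \<and>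
     (\<forall>i<3. \<forall>j<3. i \<noteq> j \<longrightarrow> fold_line V w i \<inter> fold_line V w j = {})"
    using f unfolding folded_ribbon_3stick_def .
  have inj: "inj cnj" by (auto simp: inj_on_def)
  have c: "cross (cnj (V 0) - cnj (V 1)) (cnj (V 2) - cnj (V 1)) = - cross (V 0 - V 1) (V 2 - V 1)"
    by (simp only: cross_cnj[symmetric] complex_cnj_diff)
  have nc: "\<not> collinear {V 0, V 1, V 2}" using f' by (rule conjunct1)
  have "cross (V 0 - V 1) (V 2 - V 1) \<noteq> 0" using nc unfolding collinear_cross .
  then have 1: "\<not> collinear {cnj (V 0), cnj (V 1), cnj (V 2)}"
    unfolding collinear_cross c by simp
  have 3: "fold_line (\<lambda>i. cnj (V i)) w i \<inter> fold_line (\<lambda>i. cnj (V i)) w j = {}"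
    if "i < 3" "j < 3" "i \<noteq> j" for i j
  proof -
    have "fold_line V w i \<inter> fold_line V w j = {}" using f' that by blast
    then have "cnj ` fold_line V w i \<inter> cnj ` fold_line V w j = {}"
      by (rule inj_disj[OF inj])
    then show ?thesis by (rule disj_mono[OF fold_line_cnj fold_line_cnj])
  qed
  have 2: "w > 0" using f' by (rule conjunct1[OF conjunct2])
  show ?thesis unfolding folded_ribbon_3stick_def
  proof (intro conjI allI impI)
    fix i j :: nat assume "i < 3" "j < 3" "i \<noteq> j"
    then show "fold_line (\<lambda>i. cnj (V i)) w i \<inter> fold_line (\<lambda>i. cnj (V i)) w j = {}"
      by (rule 3)
  qed (rule 1, rule 2)
qed

lemma riblen_cnj: "ribbonlength (\<lambda>i. cnj (V i)) w = ribbonlength V w"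
proof -
  have "\<And>i. cmod (cnj (V (nxt i)) - cnj (V i)) = cmod (V (nxt i) - V i)"
    by (simp only: complex_cnj_diff[symmetric] complex_mod_cnj)
  then show ?thesis by (simp add: ribbonlength_def diag_len_def)
qed

lemma exc_point:
  fixes P Q a b c :: complex and l :: real
  assumes b1: "cmod b = 1" and Q: "Q = P + complex_of_real l * b" and l: "l \<ge> 0"
    and c1: "cross a b \<noteq> 0" and c2: "cross b c \<noteq> 0"
    and qs: "(1 + Re (cnj a * b)) / cross a b + (1 + Re (cnj b * c)) / cross b c \<noteq> 0"
  shows "\<exists>s t. P + complex_of_real s * (a + b) = Q + complex_of_real t * (b + c) \<and>
     \<bar>s * cross b (a + b)\<bar> = l / \<bar>(1 + Re (cnj a * b)) / cross a b + (1 + Re (cnj b * c)) / cross b c\<bar> \<and>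
     \<bar>t * cross c (b + c)\<bar> = l / \<bar>(1 + Re (cnj a * b)) / cross a b + (1 + Re (cnj b * c)) / cross b c\<bar>"
proof -
  define q1 where "q1 = (1 + Re (cnj a * b)) / cross a b"
  define q2 where "q2 = (1 + Re (cnj b * c)) / cross b c"
  define h where "h = - l / (q1 + q2)"
  define s where "s = - h / cross a b"
  define t where "t = h / cross b c"
  have qs': "q1 + q2 \<noteq> 0" using qs by (simp add: q1_def q2_def)
  have bb: "cnj b * b = 1"
    using b1 by (metis complex_norm_square mult.commute of_real_1 power_one)
  define X where "X = complex_of_real s * (a + b) - complex_of_real t * (b + c) - complex_of_real l * b"
  have cX: "cnj b * X = complex_of_real s * (cnj b * a + 1) - complex_of_real t * (1 + cnj b * c) - complex_of_real l"
  proof -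
    have "cnj b * X = complex_of_real s * (cnj b * a + cnj b * b) - complex_of_real t * (cnj b * b + cnj b * c) - complex_of_real l * (cnj b * b)"
      unfolding X_def by (simp add: algebra_simps)
    then show ?thesis unfolding bb by simp
  qed
  have r1: "Re (cnj b * a) = Re (cnj a * b)"
    by (simp add: algebra_simps)
  have i1: "Im (cnj b * a) = - cross a b"
    unfolding cross_def by (simp add: algebra_simps)
  have i2: "Im (cnj b * c) = cross b c" by (simp add: cross_def)
  have "Re (cnj b * X) = s * (1 + Re (cnj a * b)) - t * (1 + Re (cnj b * c)) - l"
    unfolding cX using r1 by simp
  also have "\<dots> = - h * q1 - h * q2 - l"
    unfolding s_def t_def q1_def q2_def using c1 c2 by (simp add: field_simps)
  also have "\<dots> = - (h * (q1 + q2)) - l" by (simp add: algebra_simps)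
  also have "\<dots> = 0" unfolding h_def using qs' by simp
  finally have re0: "Re (cnj b * X) = 0" .
  have "Im (cnj b * X) = s * (- cross a b) - t * cross b c"
    unfolding cX using i1 i2 by simp
  also have "\<dots> = 0" unfolding s_def t_def using c1 c2 by simp
  finally have im0: "Im (cnj b * X) = 0" .
  have "cnj b * X = 0" using re0 im0 by (simp add: complex_eq_iff)
  moreover have "b \<noteq> 0" using b1 by auto
  ultimately have "X = 0" by simp
  then have eq: "P + complex_of_real s * (a + b) = Q + complex_of_real t * (b + c)"
    unfolding X_def Q by (simp add: algebra_simps)
  have cr1: "cross b (a + b) = - cross a b" by (simp add: cross_def algebra_simps)
  have cr2: "cross c (b + c) = - cross b c" by (simp add: cross_def algebra_simps)
  have habs: "\<bar>h\<bar> = l / \<bar>q1 + q2\<bar>" unfolding h_def using l by (simp add: abs_divide)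
  have e1: "\<bar>s * cross b (a + b)\<bar> = \<bar>h\<bar>" unfolding cr1 s_def using c1 by simp
  have e2: "\<bar>t * cross c (b + c)\<bar> = \<bar>h\<bar>" unfolding cr2 t_def using c2 by simp
  show ?thesis
  proof (intro exI conjI)
    show "P + complex_of_real s * (a + b) = Q + complex_of_real t * (b + c)" by (rule eq)
    show "\<bar>s * cross b (a + b)\<bar> = l / \<bar>(1 + Re (cnj a * b)) / cross a b + (1 + Re (cnj b * c)) / cross b c\<bar>"
      using e1 habs unfolding q1_def q2_def by simp
    show "\<bar>t * cross c (b + c)\<bar> = l / \<bar>(1 + Re (cnj a * b)) / cross a b + (1 + Re (cnj b * c)) / cross b c\<bar>"
      using e2 habs unfolding q1_def q2_def by simp
  qed
qed

definition qf :: "(nat \<Rightarrow> complex) \<Rightarrow> nat \<Rightarrow> real" where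
  "qf V i = (1 + Re (cnj (edir V (prv i)) * edir V i)) / cross (edir V (prv i)) (edir V i)"

lemma nxt_simps: "nxt 0 = 1" "nxt 1 = 2" "nxt 2 = 0" "prv 0 = 2" "prv 1 = 0" "prv 2 = 1"
  by (simp_all add: nxt_def prv_def)

lemma prv_nxt: "i < 3 \<Longrightarrow> prv (nxt i) = i"
proof -
  assume "i < 3"
  then have "i = 0 \<or> i = 1 \<or> i = 2" by auto
  then show ?thesis by (auto simp: nxt_def prv_def)
qed

lemma nxt_lt: "i < 3 \<Longrightarrow> nxt i < 3" by (simp add: nxt_def)

lemma nxt_neq: "i < 3 \<Longrightarrow> nxt i \<noteq> i"
proof -
  assume "i < 3"
  then have "i = 0 \<or> i = 1 \<or> i = 2" by auto
  then show ?thesis by (auto simp: nxt_def)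
qed

lemma edir_unit: "V (nxt i) \<noteq> V i \<Longrightarrow> cmod (edir V i) = 1"
  by (simp add: edir_def norm_divide)

lemma edir_step: "V (nxt i) = V i + complex_of_real (cmod (V (nxt i) - V i)) * edir V i"
proof (cases "V (nxt i) = V i")
  case True then show ?thesis by (simp add: edir_def)
next
  case False then show ?thesis by (simp add: edir_def)
qed

lemma edge_bound:
  assumes f: "folded_ribbon_3stick V w" and i: "i < 3"
    and u: "cmod (edir V i) = 1"
    and c1: "cross (edir V (prv i)) (edir V i) \<noteq> 0"
    and c2: "cross (edir V i) (edir V (nxt i)) \<noteq> 0"
    and qs: "qf V i + qf V (nxt i) \<noteq> 0"
  shows "cmod (V (nxt i) - V i) / \<bar>qf V i + qf V (nxt i)\<bar> > w / 2"
proof (rule ccontr)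
  assume nle: "\<not> ?thesis"
  have disj: "fold_line V w i \<inter> fold_line V w (nxt i) = {}"
    using f i nxt_lt[OF i] nxt_neq[OF i] unfolding folded_ribbon_3stick_def by metis
  have qn: "qf V (nxt i) = (1 + Re (cnj (edir V i) * edir V (nxt i))) / cross (edir V i) (edir V (nxt i))"
    unfolding qf_def prv_nxt[OF i] ..
  obtain s t where st: "V i + complex_of_real s * (edir V (prv i) + edir V i) =
      V (nxt i) + complex_of_real t * (edir V i + edir V (nxt i))"
    "\<bar>s * cross (edir V i) (edir V (prv i) + edir V i)\<bar> = cmod (V (nxt i) - V i) / \<bar>qf V i + qf V (nxt i)\<bar>"
    "\<bar>t * cross (edir V (nxt i)) (edir V i + edir V (nxt i))\<bar> = cmod (V (nxt i) - V i) / \<bar>qf V i + qf V (nxt i)\<bar>"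
  proof -
    have Qe: "qf V i + qf V (nxt i) = (1 + Re (cnj (edir V (prv i)) * edir V i)) / cross (edir V (prv i)) (edir V i)
       + (1 + Re (cnj (edir V i) * edir V (nxt i))) / cross (edir V i) (edir V (nxt i))"
      unfolding qn by (simp only: qf_def)
    show ?thesis using exc_point[OF u edir_step norm_ge_zero c1 c2] qs that unfolding Qe by blast
  qed
  have fn: "fdir V (nxt i) = edir V i + edir V (nxt i)" unfolding fdir_def prv_nxt[OF i] ..
  have m1: "V i + complex_of_real s * fdir V i \<in> fold_line V w i"
    unfolding fold_line_def fdir_def using st(2) nle by force
  have m2: "V (nxt i) + complex_of_real t * fdir V (nxt i) \<in> fold_line V w (nxt i)"
    unfolding fold_line_def using st(3) nle fn by force
  have "V i + complex_of_real s * fdir V i = V (nxt i) + complex_of_real t * fdir V (nxt i)"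
    unfolding fn using st(1) unfolding fdir_def .
  then have x: "V (nxt i) + complex_of_real t * fdir V (nxt i) \<in> fold_line V w i"
    using m1 by (rule subst)
  have "V (nxt i) + complex_of_real t * fdir V (nxt i) \<in> fold_line V w i \<inter> fold_line V w (nxt i)"
    by (rule IntI[OF x m2])
  then show False unfolding disj by (rule emptyE)
qed

lemma final_arith:
  fixes q0 q1 q2 l0 l1 l2 w :: real
  assumes sg: "(q0 > 0 \<and> q1 > 0 \<and> q2 > 0) \<or> (q0 < 0 \<and> q1 < 0 \<and> q2 < 0)"
    and qq: "q0*q1 + q1*q2 + q2*q0 = 1" and w: "w > 0"
    and b0: "l0 / \<bar>q0 + q1\<bar> > w/2" and b1: "l1 / \<bar>q1 + q2\<bar> > w/2" and b2: "l2 / \<bar>q2 + q0\<bar> > w/2"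
  shows "(l0 + l1 + l2) / w \<ge> sqrt 3"
proof -
  define p0 where "p0 = \<bar>q0\<bar>"
  define p1 where "p1 = \<bar>q1\<bar>"
  define p2 where "p2 = \<bar>q2\<bar>"
  have pp: "p0 > 0" "p1 > 0" "p2 > 0" using sg unfolding p0_def p1_def p2_def by auto
  have a01: "\<bar>q0 + q1\<bar> = p0 + p1" and a12: "\<bar>q1 + q2\<bar> = p1 + p2" and a20: "\<bar>q2 + q0\<bar> = p2 + p0"
    using sg unfolding p0_def p1_def p2_def by auto
  have pq: "p0*p1 + p1*p2 + p2*p0 = 1"
    using sg qq unfolding p0_def p1_def p2_def by (auto simp: abs_mult[symmetric] abs_of_pos mult_pos_pos mult_neg_neg)
  have l0: "l0 > w/2 * (p0 + p1)" using b0 pp unfolding a01 by (simp add: field_simps)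
  have l1: "l1 > w/2 * (p1 + p2)" using b1 pp unfolding a12 by (simp add: field_simps)
  have l2: "l2 > w/2 * (p2 + p0)" using b2 pp unfolding a20 by (simp add: field_simps)
  define S where "S = p0 + p1 + p2"
  have "S^2 \<ge> 3"
  proof -
    have "S^2 - 3 * (p0*p1 + p1*p2 + p2*p0) = ((p0-p1)^2 + (p1-p2)^2 + (p2-p0)^2)/2"
      unfolding S_def by (simp add: power2_eq_square algebra_simps)
    then have e: "S^2 - 3 = ((p0-p1)^2 + (p1-p2)^2 + (p2-p0)^2)/2" unfolding pq by simp
    have "((p0-p1)^2 + (p1-p2)^2 + (p2-p0)^2)/2 \<ge> 0" by simp
    then show ?thesis using e by linarith
  qed
  then have "sqrt 3 \<le> sqrt (S^2)" by (rule real_sqrt_le_mono)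
  also have "sqrt (S^2) = S" using pp unfolding S_def by simp
  finally have S3: "sqrt 3 \<le> S" .
  have "l0 + l1 + l2 > w * S" using l0 l1 l2 unfolding S_def by (simp add: algebra_simps)
  then have "(l0 + l1 + l2) / w > S" using w by (simp add: field_simps)
  then show ?thesis using S3 by simp
qed

lemma unit_cnj: "cmod e = 1 \<Longrightarrow> e * cnj e = 1"
  by (metis complex_norm_square of_real_1 power_one)

lemma tri_identity:
  fixes e0 e1 e2 :: complex
  assumes u0: "cmod e0 = 1" and u1: "cmod e1 = 1" and u2: "cmod e2 = 1"
    and c0: "cross e2 e0 \<noteq> 0" and c1: "cross e0 e1 \<noteq> 0" and c2: "cross e1 e2 \<noteq> 0"
  shows "((1 + Re (cnj e2 * e0)) / cross e2 e0) * ((1 + Re (cnj e0 * e1)) / cross e0 e1)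
       + ((1 + Re (cnj e0 * e1)) / cross e0 e1) * ((1 + Re (cnj e1 * e2)) / cross e1 e2)
       + ((1 + Re (cnj e1 * e2)) / cross e1 e2) * ((1 + Re (cnj e2 * e0)) / cross e2 e0) = 1"
proof -
  define z0 where "z0 = cnj e2 * e0"
  define z1 where "z1 = cnj e0 * e1"
  define z2 where "z2 = cnj e1 * e2"
  have n0: "e0 * cnj e0 = 1" "e1 * cnj e1 = 1" "e2 * cnj e2 = 1" using u0 u1 u2 by (simp_all add: unit_cnj)
  have zz: "z0 * z1 * z2 = 1"
  proof -
    have "z0 * z1 * z2 = (e0 * cnj e0) * (e1 * cnj e1) * (e2 * cnj e2)"
      unfolding z0_def z1_def z2_def by (simp add: algebra_simps)
    then show ?thesis using n0 by simp
  qed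
  have zc: "z0 * cnj z0 = 1" "z1 * cnj z1 = 1" "z2 * cnj z2 = 1"
  proof -
    have "z0 * cnj z0 = (e0 * cnj e0) * (e2 * cnj e2)" unfolding z0_def by (simp add: algebra_simps)
    then show "z0 * cnj z0 = 1" using n0 by simp
    have "z1 * cnj z1 = (e0 * cnj e0) * (e1 * cnj e1)" unfolding z1_def by (simp add: algebra_simps)
    then show "z1 * cnj z1 = 1" using n0 by simp
    have "z2 * cnj z2 = (e1 * cnj e1) * (e2 * cnj e2)" unfolding z2_def by (simp add: algebra_simps)
    then show "z2 * cnj z2 = 1" using n0 by simp
  qed
  define P where "P = (1 + cnj z0) * (1 + cnj z1) * (1 + cnj z2)"
  have hz: "\<And>z. z * cnj z = 1 \<Longrightarrow> 1 + z = z * (1 + cnj z)" by (simp add: algebra_simps)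
  have "cnj P = (1 + z0) * (1 + z1) * (1 + z2)" unfolding P_def by simp
  also have "\<dots> = (z0 * z1 * z2) * P" unfolding P_def hz[OF zc(1)] hz[OF zc(2)] hz[OF zc(3)]
    by (simp add: algebra_simps)
  also have "\<dots> = P" using zz by simp
  finally have "cnj P = P" .
  then have "Im (cnj P) = Im P" by (rule arg_cong)
  then have imP: "Im P = 0" by simp
  define a0 where "a0 = 1 + Re z0"
  define a1 where "a1 = 1 + Re z1"
  define a2 where "a2 = 1 + Re z2"
  have cz: "cross e2 e0 = Im z0" "cross e0 e1 = Im z1" "cross e1 e2 = Im z2"
    unfolding z0_def z1_def z2_def cross_def by simp_all
  have "Im P = Im z0 * Im z1 * Im z2 - (a0 * a1 * Im z2 + a0 * Im z1 * a2 + Im z0 * a1 * a2)"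
    unfolding P_def a0_def a1_def a2_def by (simp add: algebra_simps)
  then have key: "a0 * a1 * Im z2 + a0 * Im z1 * a2 + Im z0 * a1 * a2 = Im z0 * Im z1 * Im z2"
    using imP by simp
  have nz: "Im z0 \<noteq> 0" "Im z1 \<noteq> 0" "Im z2 \<noteq> 0" using c0 c1 c2 cz by simp_all
  show ?thesis
    unfolding z0_def[symmetric] z1_def[symmetric] z2_def[symmetric] cz
      a0_def[symmetric] a1_def[symmetric] a2_def[symmetric]
    using nz key by (simp add: field_simps)
qed

lemma sum3: "(\<Sum>i<(3::nat). f i) = f 0 + f 1 + (f 2 :: 'a :: comm_monoid_add)"
  by (simp add: eval_nat_numeral add.assoc)

lemma cross_lin1: "cross (complex_of_real r * x) y = r * cross x y"
  by (simp add: cross_def algebra_simps)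

lemma one_plus_re_pos:
  assumes "cmod a = 1" "cmod b = 1" "cross a b \<noteq> 0"
  shows "1 + Re (cnj a * b) > 0"
proof -
  have "cmod (cnj a * b) = 1" using assms by (simp add: norm_mult)
  then have "(Re (cnj a * b))^2 + (Im (cnj a * b))^2 = 1" using cmod_power2[of "cnj a * b"] by simp
  moreover have "(Im (cnj a * b))^2 > 0" using assms(3) by (simp add: cross_def)
  ultimately have "(Re (cnj a * b))^2 < 1" by linarith
  then have "\<bar>Re (cnj a * b)\<bar> < 1" by (simp add: abs_square_less_1)
  then show ?thesis by linarith
qed

lemma part1:
  assumes f: "folded_ribbon_3stick V w"
  shows "ribbonlength V w \<ge> sqrt 3"
proof -
  have f': "\<not> collinear {V 0, V 1, V 2} \<and> w > 0 \<and>
     (\<forall>i<3. \<forall>j<3. i \<noteq> j \<longrightarrow> fold_line V w i \<inter> fold_line V w j = {})"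
    using f unfolding folded_ribbon_3stick_def .
  have nc: "\<not> collinear {V 0, V 1, V 2}" using f' by (rule conjunct1)
  have w: "w > 0" using f' by (rule conjunct1[OF conjunct2])
  have d01: "V 1 \<noteq> V 0"
  proof
    assume "V 1 = V 0" then have "collinear {V 0, V 1, V 2}" by simp
    with nc show False ..
  qed
  have d12: "V 2 \<noteq> V 1"
  proof
    assume "V 2 = V 1" then have "collinear {V 0, V 1, V 2}" by simp
    with nc show False ..
  qed
  have d20: "V 0 \<noteq> V 2"
  proof
    assume "V 0 = V 2" then have "collinear {V 0, V 1, V 2}" by (simp add: insert_commute)
    with nc show False ..
  qed
  define e0 where "e0 = edir V 0"
  define e1 where "e1 = edir V 1"
  define e2 where "e2 = edir V 2"
  define l0 where "l0 = cmod (V 1 - V 0)"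
  define l1 where "l1 = cmod (V 2 - V 1)"
  define l2 where "l2 = cmod (V 0 - V 2)"
  have u0: "cmod e0 = 1" unfolding e0_def by (rule edir_unit, unfold nxt_simps, rule d01)
  have u1: "cmod e1 = 1" unfolding e1_def by (rule edir_unit, unfold nxt_simps, rule d12)
  have u2: "cmod e2 = 1" unfolding e2_def by (rule edir_unit, unfold nxt_simps, rule d20)
  have lp: "l0 > 0" "l1 > 0" "l2 > 0" unfolding l0_def l1_def l2_def using d01 d12 d20 by auto
  have s0: "V 1 - V 0 = complex_of_real l0 * e0"
    using edir_step[of V 0] unfolding nxt_simps l0_def e0_def by (metis add_diff_cancel_left')
  have s1: "V 2 - V 1 = complex_of_real l1 * e1"
    using edir_step[of V 1] unfolding nxt_simps l1_def e1_def by (metis add_diff_cancel_left')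
  have s2: "V 0 - V 2 = complex_of_real l2 * e2"
    using edir_step[of V 2] unfolding nxt_simps l2_def e2_def by (metis add_diff_cancel_left')
  define D where "D = cross (V 1 - V 0) (V 2 - V 1)"
  have "cross (V 0 - V 1) (V 2 - V 1) \<noteq> 0" using nc unfolding collinear_cross .
  moreover have "cross (V 0 - V 1) (V 2 - V 1) = - D" unfolding D_def cross_def by (simp add: algebra_simps)
  ultimately have D0: "D \<noteq> 0" by simp
  have D1: "D = l0 * l1 * cross e0 e1" unfolding D_def s0 s1 cross_lin1 cross_lin by simp
  have D2: "D = l1 * l2 * cross e1 e2"
  proof -
    have "D = cross (V 2 - V 1) (V 0 - V 2)" unfolding D_def cross_def by (simp add: algebra_simps)
    then show ?thesis unfolding s1 s2 cross_lin1 cross_lin by simp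
  qed
  have D3: "D = l2 * l0 * cross e2 e0"
  proof -
    have "D = cross (V 0 - V 2) (V 1 - V 0)" unfolding D_def cross_def by (simp add: algebra_simps)
    then show ?thesis unfolding s0 s2 cross_lin1 cross_lin by simp
  qed
  have c0: "cross e2 e0 \<noteq> 0" using D0 D3 by auto
  have c1: "cross e0 e1 \<noteq> 0" using D0 D1 by auto
  have c2: "cross e1 e2 \<noteq> 0" using D0 D2 by auto
  define q0 where "q0 = (1 + Re (cnj e2 * e0)) / cross e2 e0"
  define q1 where "q1 = (1 + Re (cnj e0 * e1)) / cross e0 e1"
  define q2 where "q2 = (1 + Re (cnj e1 * e2)) / cross e1 e2"
  have qf0: "qf V 0 = q0" unfolding qf_def q0_def e0_def e2_def nxt_simps ..
  have qf1: "qf V 1 = q1" unfolding qf_def q1_def e0_def e1_def nxt_simps ..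
  have qf2: "qf V 2 = q2" unfolding qf_def q2_def e1_def e2_def nxt_simps ..
  have a0: "1 + Re (cnj e2 * e0) > 0" by (rule one_plus_re_pos[OF u2 u0 c0])
  have a1: "1 + Re (cnj e0 * e1) > 0" by (rule one_plus_re_pos[OF u0 u1 c1])
  have a2: "1 + Re (cnj e1 * e2) > 0" by (rule one_plus_re_pos[OF u1 u2 c2])
  have ce: "cross e0 e1 = D/(l0*l1)" "cross e1 e2 = D/(l1*l2)" "cross e2 e0 = D/(l2*l0)"
    using D1 D2 D3 lp by (simp_all add: field_simps)
  have sg: "(q0 > 0 \<and> q1 > 0 \<and> q2 > 0) \<or> (q0 < 0 \<and> q1 < 0 \<and> q2 < 0)"
  proof (cases "D > 0")
    case True
    then have "cross e0 e1 > 0" "cross e1 e2 > 0" "cross e2 e0 > 0"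
      unfolding ce using True lp by simp_all
    then show ?thesis unfolding q0_def q1_def q2_def using a0 a1 a2 by simp
  next
    case False
    then have "D < 0" using D0 by simp
    then have "cross e0 e1 < 0" "cross e1 e2 < 0" "cross e2 e0 < 0"
      unfolding ce using \<open>D < 0\<close> lp by (simp_all add: divide_neg_pos)
    then show ?thesis unfolding q0_def q1_def q2_def using a0 a1 a2 by (simp add: divide_pos_neg)
  qed
  have qq: "q0*q1 + q1*q2 + q2*q0 = 1"
    unfolding q0_def q1_def q2_def by (rule tri_identity[OF u0 u1 u2 c0 c1 c2])
  have q01: "q0 + q1 \<noteq> 0" and q12: "q1 + q2 \<noteq> 0" and q20: "q2 + q0 \<noteq> 0" using sg by auto
  have b0: "l0 / \<bar>q0 + q1\<bar> > w/2"
    using edge_bound[OF f, of 0] u0 c0 c1 q01 unfolding nxt_simps qf0 qf1 e0_def e1_def e2_def l0_def by simp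
  have b1: "l1 / \<bar>q1 + q2\<bar> > w/2"
    using edge_bound[OF f, of 1] u1 c1 c2 q12 unfolding nxt_simps qf1 qf2 e0_def e1_def e2_def l1_def by simp
  have b2: "l2 / \<bar>q2 + q0\<bar> > w/2"
    using edge_bound[OF f, of 2] u2 c2 c0 q20 unfolding nxt_simps qf2 qf0 e0_def e1_def e2_def l2_def by simp
  have "diag_len V = l0 + l1 + l2" unfolding diag_len_def sum3 nxt_simps l0_def l1_def l2_def ..
  then show ?thesis unfolding ribbonlength_def using final_arith[OF sg qq w b0 b1 b2] by simp
qed

lemma cross_Complex: "cross (Complex a b) (Complex x y) = a * y - b * x"
  by (simp add: cross_def)

lemma c3: "sqrt 3 * sqrt 3 = (3::real)" by simp
lemma c3pos: "sqrt 3 > (0::real)" by simp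

lemma cmod_unit1: "cmod (Complex (-1/2) (sqrt 3/2)) = 1"
  by (simp add: complex_norm power2_eq_square)
lemma cmod_unit2: "cmod (Complex (-1/2) (-sqrt 3/2)) = 1"
  by (simp add: complex_norm power2_eq_square)

lemma Complex_diff: "Complex a b - Complex c d = Complex (a - c) (b - d)"
  by (simp add: complex_eq_iff)

lemma mem_seg:
  assumes "0 \<le> u" "u \<le> 1" "x = (1-u)*a1 + u*b1" "y = (1-u)*a2 + u*b2"
  shows "Complex x y \<in> closed_segment (Complex a1 a2) (Complex b1 b2)"
  unfolding in_segment
  by (rule exI[of _ u]) (simp add: assms complex_eq_iff)

lemma mem_seg2:
  assumes "0 \<le> p" "0 \<le> q" "p + q > 0" "(p+q)*x = q*a1 + p*b1" "(p+q)*y = q*a2 + p*b2"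
  shows "Complex x y \<in> closed_segment (Complex a1 a2) (Complex b1 b2)"
proof (rule mem_seg[of "p/(p+q)"])
  have pq: "p + q \<noteq> 0" using assms(3) by simp
  show "0 \<le> p/(p+q)" using assms by simp
  show "p/(p+q) \<le> 1" using assms by simp
  have e: "1 - p/(p+q) = q/(p+q)" using pq by (simp add: field_simps)
  have x: "x = ((p+q)*x)/(p+q)" using pq by simp
  have y: "y = ((p+q)*y)/(p+q)" using pq by simp
  show "x = (1 - p/(p+q)) * a1 + p/(p+q) * b1" unfolding e
    by (subst x, subst assms(4)) (simp add: add_divide_distrib)
  show "y = (1 - p/(p+q)) * a2 + p/(p+q) * b2" unfolding e
    by (subst y, subst assms(5)) (simp add: add_divide_distrib)
qed

lemma seg_cross:
  assumes "z \<in> closed_segment a b"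
  shows "\<exists>u. 0 \<le> u \<and> u \<le> 1 \<and> cross e (z - p) = (1-u) * cross e (a - p) + u * cross e (b - p)"
proof -
  obtain u where u: "0 \<le> u" "u \<le> 1" "z = (1-u) *\<^sub>R a + u *\<^sub>R b" using assms by (auto simp: in_segment)
  have "z - p = complex_of_real (1-u) * (a - p) + complex_of_real u * (b - p)"
    unfolding u(3) by (simp add: scaleR_conv_of_real algebra_simps)
  then have "cross e (z - p) = (1-u) * cross e (a - p) + u * cross e (b - p)"
    by (simp only: cross_lin)
  then show ?thesis using u by blast
qed

lemma seg_ge:
  assumes "z \<in> closed_segment a b" "r \<le> cross e (a - p)" "r \<le> cross e (b - p)"
  shows "r \<le> cross e (z - p)"
proof -
  obtain u where u: "0 \<le> u" "u \<le> 1" "cross e (z - p) = (1-u) * cross e (a - p) + u * cross e (b - p)"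
    using seg_cross[OF assms(1)] by blast
  have "(1-u) * r \<le> (1-u) * cross e (a - p)" using u assms by (intro mult_left_mono) auto
  moreover have "u * r \<le> u * cross e (b - p)" using u assms by (intro mult_left_mono) auto
  ultimately show ?thesis unfolding u(3) by (simp add: algebra_simps)
qed

lemma seg_le:
  assumes "z \<in> closed_segment a b" "cross e (a - p) \<le> r" "cross e (b - p) \<le> r"
  shows "cross e (z - p) \<le> r"
proof -
  obtain u where u: "0 \<le> u" "u \<le> 1" "cross e (z - p) = (1-u) * cross e (a - p) + u * cross e (b - p)"
    using seg_cross[OF assms(1)] by blast
  have "(1-u) * cross e (a - p) \<le> (1-u) * r" using u assms by (intro mult_left_mono) auto
  moreover have "u * cross e (b - p) \<le> u * r" using u assms by (intro mult_left_mono) auto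
  ultimately show ?thesis unfolding u(3) by (simp add: algebra_simps)
qed

lemma nonempty_I: "x \<in> A \<Longrightarrow> x \<in> B \<Longrightarrow> A \<inter> B \<noteq> {}" by blast

lemma empty_I: "(\<And>x. x \<in> A \<Longrightarrow> x \<in> B \<Longrightarrow> False) \<Longrightarrow> A \<inter> B = {}" by blast

lemma sum_expand: "(\<Sum>j<(3::nat). \<Sum>k\<in>{..<3} - {j}. g j k) = g 0 1 + g 0 2 + g 1 0 + g 1 2 + g 2 0 + (g 2 1 :: real)"
proof -
  have a: "{..<3::nat} - {0} = {1,2}" "{..<3::nat} - {1} = {0,2}" "{..<3::nat} - {2} = {0,1}" by auto
  show ?thesis unfolding sum3 a by simp
qed

lemma sum_pm: "(\<Sum>\<sigma>\<in>{-1,1::real}. h \<sigma>) = h (-1) + (h 1 :: real)" by simp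

lemma Lk_expand: "ribbon_Lk V w F = 1/2 * (
   ((if diag_edge V 0 \<inter> bdry_seg V w 1 (-1) \<noteq> {} then crossing_sign V F 0 1 else 0) + (if diag_edge V 0 \<inter> bdry_seg V w 1 1 \<noteq> {} then crossing_sign V F 0 1 else 0))
 + ((if diag_edge V 0 \<inter> bdry_seg V w 2 (-1) \<noteq> {} then crossing_sign V F 0 2 else 0) + (if diag_edge V 0 \<inter> bdry_seg V w 2 1 \<noteq> {} then crossing_sign V F 0 2 else 0))
 + ((if diag_edge V 1 \<inter> bdry_seg V w 0 (-1) \<noteq> {} then crossing_sign V F 1 0 else 0) + (if diag_edge V 1 \<inter> bdry_seg V w 0 1 \<noteq> {} then crossing_sign V F 1 0 else 0))
 + ((if diag_edge V 1 \<inter> bdry_seg V w 2 (-1) \<noteq> {} then crossing_sign V F 1 2 else 0) + (if diag_edge V 1 \<inter> bdry_seg V w 2 1 \<noteq> {} then crossing_sign V F 1 2 else 0))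
 + ((if diag_edge V 2 \<inter> bdry_seg V w 0 (-1) \<noteq> {} then crossing_sign V F 2 0 else 0) + (if diag_edge V 2 \<inter> bdry_seg V w 0 1 \<noteq> {} then crossing_sign V F 2 0 else 0))
 + ((if diag_edge V 2 \<inter> bdry_seg V w 1 (-1) \<noteq> {} then crossing_sign V F 2 1 else 0) + (if diag_edge V 2 \<inter> bdry_seg V w 1 1 \<noteq> {} then crossing_sign V F 2 1 else 0)))"
  unfolding ribbon_Lk_def sum_expand[where g = "\<lambda>j k. \<Sum>\<sigma>\<in>{-1,1::real}. if diag_edge V j \<inter> bdry_seg V w k \<sigma> \<noteq> {} then crossing_sign V F j k else 0"]
  unfolding sum_pm ..

context
  fixes U :: "nat \<Rightarrow> complex"
  assumes U0: "U 0 = Complex 0 0" and U1: "U 1 = Complex 1 0" and U2: "U 2 = Complex (1/2) (sqrt 3/2)"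
begin

lemma e0: "edir U 0 = Complex 1 0"
proof -
  have h: "U 1 - U 0 = 1" unfolding U1 U0 by (simp add: complex_eq_iff)
  show ?thesis unfolding edir_def nxt_simps h by (simp add: complex_eq_iff)
qed

lemma e1: "edir U 1 = Complex (-1/2) (sqrt 3/2)"
proof -
  have h: "U 2 - U 1 = Complex (-1/2) (sqrt 3/2)" unfolding U1 U2 by (simp add: complex_eq_iff)
  have n: "cmod (U 2 - U 1) = 1" unfolding h by (rule cmod_unit1)
  show ?thesis unfolding edir_def nxt_simps n unfolding h by simp
qed

lemma e2: "edir U 2 = Complex (-1/2) (-sqrt 3/2)"
proof -
  have h: "U 0 - U 2 = Complex (-1/2) (-sqrt 3/2)" unfolding U0 U2 by (simp add: complex_eq_iff)
  have n: "cmod (U 0 - U 2) = 1" unfolding h by (rule cmod_unit2)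
  show ?thesis unfolding edir_def nxt_simps n unfolding h by simp
qed

lemma f0: "fdir U 0 = Complex (1/2) (-sqrt 3/2)"
  unfolding fdir_def nxt_simps e0 e2 by (simp add: complex_eq_iff)
lemma f1: "fdir U 1 = Complex (1/2) (sqrt 3/2)"
  unfolding fdir_def nxt_simps e0 e1 by (simp add: complex_eq_iff)
lemma f2: "fdir U 2 = Complex (-1) 0"
  unfolding fdir_def nxt_simps e1 e2 by (simp add: complex_eq_iff)

lemma fe00: "fold_end U (m * sqrt 3) 0 0 \<sigma> = Complex (-\<sigma>*m/2) (\<sigma>*m* sqrt 3/2)"
  unfolding fold_end_def e0 f0 U0 cross_Complex by (simp add: complex_eq_iff field_simps)
lemma fe10: "fold_end U (m * sqrt 3) 1 0 \<sigma> = Complex (1 + \<sigma>*m/2) (\<sigma>*m* sqrt 3/2)"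
  unfolding fold_end_def e0 f1 U1 cross_Complex by (simp add: complex_eq_iff field_simps)
lemma fe11: "fold_end U (m * sqrt 3) 1 1 \<sigma> = Complex (1 - \<sigma>*m/2) (-\<sigma>*m* sqrt 3/2)"
  unfolding fold_end_def e1 f1 U1 cross_Complex by (simp add: complex_eq_iff field_simps)
lemma fe21: "fold_end U (m * sqrt 3) 2 1 \<sigma> = Complex (1/2 - \<sigma>*m) (sqrt 3/2)"
  unfolding fold_end_def e1 f2 U2 cross_Complex by (simp add: complex_eq_iff field_simps)
lemma fe22: "fold_end U (m * sqrt 3) 2 2 \<sigma> = Complex (1/2 + \<sigma>*m) (sqrt 3/2)"
  unfolding fold_end_def e2 f2 U2 cross_Complex by (simp add: complex_eq_iff field_simps)
lemma fe02: "fold_end U (m * sqrt 3) 0 2 \<sigma> = Complex (\<sigma>*m/2) (-\<sigma>*m* sqrt 3/2)"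
  unfolding fold_end_def e2 f0 U0 cross_Complex by (simp add: complex_eq_iff field_simps)

context
  fixes m :: real
  assumes m0: "0 < m" and m1: "m < 1"
begin

lemma mp: "1 + m \<noteq> 0" "m + 1 \<noteq> 0" using m0 by simp_all

lemma B0: "bdry_seg U (m * sqrt 3) 0 \<sigma> = closed_segment (Complex (-\<sigma>*m/2) (\<sigma>*m * sqrt 3/2)) (Complex (1 + \<sigma>*m/2) (\<sigma>*m * sqrt 3/2))"
  unfolding bdry_seg_def nxt_simps fe00 fe10 ..
lemma B1: "bdry_seg U (m * sqrt 3) 1 \<sigma> = closed_segment (Complex (1 - \<sigma>*m/2) (-\<sigma>*m * sqrt 3/2)) (Complex (1/2 - \<sigma>*m) (sqrt 3/2))"
  unfolding bdry_seg_def nxt_simps fe11 fe21 ..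
lemma B2: "bdry_seg U (m * sqrt 3) 2 \<sigma> = closed_segment (Complex (1/2 + \<sigma>*m) (sqrt 3/2)) (Complex (\<sigma>*m/2) (-\<sigma>*m * sqrt 3/2))"
  unfolding bdry_seg_def nxt_simps fe22 fe02 ..
lemma Dg0: "diag_edge U 0 = closed_segment (Complex 0 0) (Complex 1 0)"
  unfolding diag_edge_def nxt_simps U0 U1 ..
lemma Dg1: "diag_edge U 1 = closed_segment (Complex 1 0) (Complex (1/2) (sqrt 3/2))"
  unfolding diag_edge_def nxt_simps U1 U2 ..
lemma Dg2: "diag_edge U 2 = closed_segment (Complex (1/2) (sqrt 3/2)) (Complex 0 0)"
  unfolding diag_edge_def nxt_simps U2 U0 ..

lemma X20: "diag_edge U 2 \<inter> bdry_seg U (m * sqrt 3) 0 1 \<noteq> {}"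
  unfolding Dg2 B0
  apply (rule nonempty_I[of "Complex (m/2) (m * sqrt 3/2)"])
   apply (rule mem_seg2[of "1 - m" "m"]) using m0 m1 apply (simp_all add: field_simps)[5]
  apply (rule mem_seg2[of "m" "1"]) using m0 m1 apply (simp_all add: field_simps)
  done

lemma X10: "diag_edge U 1 \<inter> bdry_seg U (m * sqrt 3) 0 1 \<noteq> {}"
  unfolding Dg1 B0
  apply (rule nonempty_I[of "Complex (1 - m/2) (m * sqrt 3/2)"])
   apply (rule mem_seg2[of "m" "1 - m"]) using m0 m1 apply (simp_all add: field_simps)[5]
  apply (rule mem_seg2[of "1" "m"]) using m0 m1 apply (simp_all add: field_simps)
  done

lemma X01: "diag_edge U 0 \<inter> bdry_seg U (m * sqrt 3) 1 1 \<noteq> {}"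
  unfolding Dg0 B1
  apply (rule nonempty_I[of "Complex (1 - m) 0"])
   apply (rule mem_seg2[of "1 - m" "m"]) using m0 m1 apply (simp_all add: field_simps)[5]
  apply (rule mem_seg2[of "m" "1"]) using m0 m1 apply (simp_all add: field_simps)
  done

lemma X21: "diag_edge U 2 \<inter> bdry_seg U (m * sqrt 3) 1 1 \<noteq> {}"
  unfolding Dg2 B1
  apply (rule nonempty_I[of "Complex (1/2 - m/2) (sqrt 3/2 - m * sqrt 3/2)"])
   apply (rule mem_seg2[of "m" "1 - m"]) using m0 m1 apply (simp_all add: field_simps)[5]
  apply (rule mem_seg2[of "1" "m"]) using m0 m1 apply (simp_all add: field_simps)
  done

lemma X12: "diag_edge U 1 \<inter> bdry_seg U (m * sqrt 3) 2 1 \<noteq> {}"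
  unfolding Dg1 B2
  apply (rule nonempty_I[of "Complex (1/2 + m/2) (sqrt 3/2 - m * sqrt 3/2)"])
   apply (rule mem_seg2[of "1 - m" "m"]) using m0 m1 apply (simp_all add: field_simps)[5]
  apply (rule mem_seg2[of "m" "1"]) using m0 m1 apply (simp_all add: field_simps)
  done

lemma X02: "diag_edge U 0 \<inter> bdry_seg U (m * sqrt 3) 2 1 \<noteq> {}"
  unfolding Dg0 B2
  apply (rule nonempty_I[of "Complex m 0"])
   apply (rule mem_seg2[of "m" "1 - m"]) using m0 m1 apply (simp_all add: field_simps)[5]
  apply (rule mem_seg2[of "1" "m"]) using m0 m1 apply (simp_all add: field_simps)
  done

lemma Y10: "diag_edge U 1 \<inter> bdry_seg U (m * sqrt 3) 0 (-1) = {}"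
proof (rule empty_I)
  fix z assume zD: "z \<in> diag_edge U 1" and zB: "z \<in> bdry_seg U (m * sqrt 3) 0 (-1)"
  have "0 \<le> cross (Complex 1 0) (z - Complex 0 0)"
    by (rule seg_ge[OF zD[unfolded Dg1]]) (simp_all add: cross_def field_simps)
  moreover have "cross (Complex 1 0) (z - Complex 0 0) \<le> - (m * sqrt 3 / 2)"
    by (rule seg_le[OF zB[unfolded B0]]) (simp_all add: cross_def field_simps)
  moreover have "m * sqrt 3 > 0" using m0 by simp
  ultimately show False by linarith
qed

lemma Y20: "diag_edge U 2 \<inter> bdry_seg U (m * sqrt 3) 0 (-1) = {}"
proof (rule empty_I)
  fix z assume zD: "z \<in> diag_edge U 2" and zB: "z \<in> bdry_seg U (m * sqrt 3) 0 (-1)"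
  have "0 \<le> cross (Complex 1 0) (z - Complex 0 0)"
    by (rule seg_ge[OF zD[unfolded Dg2]]) (simp_all add: cross_def field_simps)
  moreover have "cross (Complex 1 0) (z - Complex 0 0) \<le> - (m * sqrt 3 / 2)"
    by (rule seg_le[OF zB[unfolded B0]]) (simp_all add: cross_def field_simps)
  moreover have "m * sqrt 3 > 0" using m0 by simp
  ultimately show False by linarith
qed

lemma Y01: "diag_edge U 0 \<inter> bdry_seg U (m * sqrt 3) 1 (-1) = {}"
proof (rule empty_I)
  fix z assume zD: "z \<in> diag_edge U 0" and zB: "z \<in> bdry_seg U (m * sqrt 3) 1 (-1)"
  have "0 \<le> cross (Complex (-1/2) (sqrt 3/2)) (z - Complex 1 0)"
    by (rule seg_ge[OF zD[unfolded Dg0]]) (simp_all add: cross_def field_simps)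
  moreover have "cross (Complex (-1/2) (sqrt 3/2)) (z - Complex 1 0) \<le> - (m * sqrt 3 / 2)"
    by (rule seg_le[OF zB[unfolded B1]]) (simp_all add: cross_def field_simps)
  moreover have "m * sqrt 3 > 0" using m0 by simp
  ultimately show False by linarith
qed

lemma Y21: "diag_edge U 2 \<inter> bdry_seg U (m * sqrt 3) 1 (-1) = {}"
proof (rule empty_I)
  fix z assume zD: "z \<in> diag_edge U 2" and zB: "z \<in> bdry_seg U (m * sqrt 3) 1 (-1)"
  have "0 \<le> cross (Complex (-1/2) (sqrt 3/2)) (z - Complex 1 0)"
    by (rule seg_ge[OF zD[unfolded Dg2]]) (simp_all add: cross_def field_simps)
  moreover have "cross (Complex (-1/2) (sqrt 3/2)) (z - Complex 1 0) \<le> - (m * sqrt 3 / 2)"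
    by (rule seg_le[OF zB[unfolded B1]]) (simp_all add: cross_def field_simps)
  moreover have "m * sqrt 3 > 0" using m0 by simp
  ultimately show False by linarith
qed

lemma Y02: "diag_edge U 0 \<inter> bdry_seg U (m * sqrt 3) 2 (-1) = {}"
proof (rule empty_I)
  fix z assume zD: "z \<in> diag_edge U 0" and zB: "z \<in> bdry_seg U (m * sqrt 3) 2 (-1)"
  have "0 \<le> cross (Complex (-1/2) (-sqrt 3/2)) (z - Complex (1/2) (sqrt 3/2))"
    by (rule seg_ge[OF zD[unfolded Dg0]]) (simp_all add: cross_def field_simps)
  moreover have "cross (Complex (-1/2) (-sqrt 3/2)) (z - Complex (1/2) (sqrt 3/2)) \<le> - (m * sqrt 3 / 2)"
    by (rule seg_le[OF zB[unfolded B2]]) (simp_all add: cross_def field_simps)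
  moreover have "m * sqrt 3 > 0" using m0 by simp
  ultimately show False by linarith
qed

lemma Y12: "diag_edge U 1 \<inter> bdry_seg U (m * sqrt 3) 2 (-1) = {}"
proof (rule empty_I)
  fix z assume zD: "z \<in> diag_edge U 1" and zB: "z \<in> bdry_seg U (m * sqrt 3) 2 (-1)"
  have "0 \<le> cross (Complex (-1/2) (-sqrt 3/2)) (z - Complex (1/2) (sqrt 3/2))"
    by (rule seg_ge[OF zD[unfolded Dg1]]) (simp_all add: cross_def field_simps)
  moreover have "cross (Complex (-1/2) (-sqrt 3/2)) (z - Complex (1/2) (sqrt 3/2)) \<le> - (m * sqrt 3 / 2)"
    by (rule seg_le[OF zB[unfolded B2]]) (simp_all add: cross_def field_simps)
  moreover have "m * sqrt 3 > 0" using m0 by simp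
  ultimately show False by linarith
qed

lemma FL0: "z \<in> fold_line U (m * sqrt 3) 0 \<Longrightarrow> \<exists>s. z = Complex (s/2) (-s * sqrt 3/2) \<and> \<bar>s\<bar> \<le> m"
proof -
  assume "z \<in> fold_line U (m * sqrt 3) 0"
  then obtain s where s: "z = U 0 + complex_of_real s * fdir U 0" "\<bar>s * cross (edir U 0) (fdir U 0)\<bar> \<le> m * sqrt 3 / 2"
    unfolding fold_line_def by blast
  have "\<bar>s\<bar> \<le> m" using s(2) unfolding e0 f0 cross_Complex by (simp add: abs_mult)
  moreover have "z = Complex (s/2) (-s * sqrt 3/2)" using s(1) unfolding U0 f0 by (simp add: complex_eq_iff)
  ultimately show ?thesis by blast
qed

lemma FL1: "z \<in> fold_line U (m * sqrt 3) 1 \<Longrightarrow> \<exists>s. z = Complex (1 + s/2) (s * sqrt 3/2) \<and> \<bar>s\<bar> \<le> m"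
proof -
  assume "z \<in> fold_line U (m * sqrt 3) 1"
  then obtain s where s: "z = U 1 + complex_of_real s * fdir U 1" "\<bar>s * cross (edir U 1) (fdir U 1)\<bar> \<le> m * sqrt 3 / 2"
    unfolding fold_line_def by blast
  have "\<bar>s\<bar> \<le> m" using s(2) unfolding e1 f1 cross_Complex by (simp add: abs_mult field_simps)
  moreover have "z = Complex (1 + s/2) (s * sqrt 3/2)" using s(1) unfolding U1 f1 by (simp add: complex_eq_iff)
  ultimately show ?thesis by blast
qed

lemma FL2: "z \<in> fold_line U (m * sqrt 3) 2 \<Longrightarrow> \<exists>s. z = Complex (1/2 - s) (sqrt 3/2) \<and> \<bar>s\<bar> \<le> m"
proof -
  assume "z \<in> fold_line U (m * sqrt 3) 2"
  then obtain s where s: "z = U 2 + complex_of_real s * fdir U 2" "\<bar>s * cross (edir U 2) (fdir U 2)\<bar> \<le> m * sqrt 3 / 2"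
    unfolding fold_line_def by blast
  have "\<bar>s\<bar> \<le> m" using s(2) unfolding e2 f2 cross_Complex by (simp add: abs_mult field_simps)
  moreover have "z = Complex (1/2 - s) (sqrt 3/2)" using s(1) unfolding U2 f2 by (simp add: complex_eq_iff)
  ultimately show ?thesis by blast
qed

lemma FD01: "fold_line U (m * sqrt 3) 0 \<inter> fold_line U (m * sqrt 3) 1 = {}"
proof (rule empty_I)
  fix z assume a: "z \<in> fold_line U (m * sqrt 3) 0" and b: "z \<in> fold_line U (m * sqrt 3) 1"
  obtain s where s: "z = Complex (s/2) (-s * sqrt 3/2)" "\<bar>s\<bar> \<le> m" using FL0[OF a] by blast
  obtain t where t: "z = Complex (1 + t/2) (t * sqrt 3/2)" "\<bar>t\<bar> \<le> m" using FL1[OF b] by blast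
  have e1: "s/2 = 1 + t/2" and e2: "-s * sqrt 3/2 = t * sqrt 3/2" using s(1) t(1) by simp_all
  from e2 have "(s + t) * sqrt 3 = 0" by (simp add: algebra_simps)
  then have "s + t = 0" by simp
  then show False using e1 s(2) m1 by simp
qed

lemma FD02: "fold_line U (m * sqrt 3) 0 \<inter> fold_line U (m * sqrt 3) 2 = {}"
proof (rule empty_I)
  fix z assume a: "z \<in> fold_line U (m * sqrt 3) 0" and b: "z \<in> fold_line U (m * sqrt 3) 2"
  obtain s where s: "z = Complex (s/2) (-s * sqrt 3/2)" "\<bar>s\<bar> \<le> m" using FL0[OF a] by blast
  obtain t where t: "z = Complex (1/2 - t) (sqrt 3/2)" "\<bar>t\<bar> \<le> m" using FL2[OF b] by blast
  have e2: "-s * sqrt 3/2 = sqrt 3/2" using s(1) t(1) by simp_all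
  from e2 have "(s + 1) * sqrt 3 = 0" by (simp add: algebra_simps)
  then have "s = -1" by simp
  then show False using s(2) m1 by simp
qed

lemma FD12: "fold_line U (m * sqrt 3) 1 \<inter> fold_line U (m * sqrt 3) 2 = {}"
proof (rule empty_I)
  fix z assume a: "z \<in> fold_line U (m * sqrt 3) 1" and b: "z \<in> fold_line U (m * sqrt 3) 2"
  obtain s where s: "z = Complex (1 + s/2) (s * sqrt 3/2)" "\<bar>s\<bar> \<le> m" using FL1[OF a] by blast
  obtain t where t: "z = Complex (1/2 - t) (sqrt 3/2)" "\<bar>t\<bar> \<le> m" using FL2[OF b] by blast
  have e2: "s * sqrt 3/2 = sqrt 3/2" using s(1) t(1) by simp_all
  from e2 have "(s - 1) * sqrt 3 = 0" by (simp add: algebra_simps)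
  then have "s = 1" by simp
  then show False using s(2) m1 by simp
qed

lemma folded_U: "folded_ribbon_3stick U (m * sqrt 3)"
  unfolding folded_ribbon_3stick_def
proof (intro conjI allI impI)
  have "cross (U 0 - U 1) (U 2 - U 1) \<noteq> 0" unfolding U0 U1 U2 by (simp add: cross_def)
  then show "\<not> collinear {U 0, U 1, U 2}" unfolding collinear_cross .
  show "m * sqrt 3 > 0" using m0 by simp
  fix i j :: nat assume i: "i < 3" and j: "j < 3" and ij: "i \<noteq> j"
  have FD10: "fold_line U (m * sqrt 3) 1 \<inter> fold_line U (m * sqrt 3) 0 = {}" using FD01 by (simp only: Int_commute)
  have FD20: "fold_line U (m * sqrt 3) 2 \<inter> fold_line U (m * sqrt 3) 0 = {}" using FD02 by (simp only: Int_commute)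
  have FD21: "fold_line U (m * sqrt 3) 2 \<inter> fold_line U (m * sqrt 3) 1 = {}" using FD12 by (simp only: Int_commute)
  have "(i = 0 \<and> j = 1) \<or> (i = 0 \<and> j = 2) \<or> (i = 1 \<and> j = 0) \<or> (i = 1 \<and> j = 2) \<or> (i = 2 \<and> j = 0) \<or> (i = 2 \<and> j = 1)"
    using i j ij by auto
  then show "fold_line U (m * sqrt 3) i \<inter> fold_line U (m * sqrt 3) j = {}"
    using FD01 FD02 FD12 FD10 FD20 FD21 by (elim disjE conjE) simp_all
qed

lemma CS: "crossing_sign U (\<lambda>i. i = 0) 0 1 = 1" "crossing_sign U (\<lambda>i. i = 0) 0 2 = -1"
  "crossing_sign U (\<lambda>i. i = 0) 1 0 = 1" "crossing_sign U (\<lambda>i. i = 0) 1 2 = 1"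
  "crossing_sign U (\<lambda>i. i = 0) 2 0 = -1" "crossing_sign U (\<lambda>i. i = 0) 2 1 = 1"
  unfolding crossing_sign_def over_def nxt_simps e0 e1 e2 cross_Complex by simp_all

lemma Lk_U: "ribbon_Lk U (m * sqrt 3) (\<lambda>i. i = 0) = 1"
  unfolding Lk_expand
  by (simp only: X01 X02 X10 X12 X20 X21 Y01 Y02 Y10 Y12 Y20 Y21 CS if_True if_False not_True_eq_False
     not_False_eq_True) simp

lemma riblen_U: "ribbonlength U (m * sqrt 3) = 3 / (m * sqrt 3)"
proof -
  have h0: "U 1 - U 0 = 1" unfolding U1 U0 by (simp add: complex_eq_iff)
  have h1: "U 2 - U 1 = Complex (-1/2) (sqrt 3/2)" unfolding U1 U2 by (simp add: complex_eq_iff)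
  have h2: "U 0 - U 2 = Complex (-1/2) (-sqrt 3/2)" unfolding U0 U2 by (simp add: complex_eq_iff)
  have "cmod (U 1 - U 0) = 1" unfolding h0 by simp
  moreover have "cmod (U 2 - U 1) = 1" unfolding h1 by (rule cmod_unit1)
  moreover have "cmod (U 0 - U 2) = 1" unfolding h2 by (rule cmod_unit2)
  ultimately show ?thesis unfolding ribbonlength_def diag_len_def sum3 nxt_simps by simp
qed

end

end

lemma equi_z:
  assumes "equilateral V"
  shows "V 1 - V 0 \<noteq> 0 \<and> Re ((V 2 - V 0) / (V 1 - V 0)) = 1/2 \<and>
    (Im ((V 2 - V 0) / (V 1 - V 0)) = sqrt 3 / 2 \<or> Im ((V 2 - V 0) / (V 1 - V 0)) = - (sqrt 3 / 2))"
proof -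
  define a where "a = V 1 - V 0"
  define z where "z = (V 2 - V 0) / a"
  have E: "V 0 \<noteq> V 1" "cmod (V 1 - V 0) = cmod (V 2 - V 1)" "cmod (V 2 - V 1) = cmod (V 0 - V 2)"
    using assms unfolding equilateral_def by blast+
  have a0: "a \<noteq> 0" using E(1) unfolding a_def by simp
  have s1: "cmod (V 2 - V 1) = cmod a" using E(2) unfolding a_def by simp
  have "cmod (V 2 - V 0) = cmod (V 0 - V 2)" by (rule norm_minus_commute)
  then have s2: "cmod (V 2 - V 0) = cmod a" using E(2) E(3) unfolding a_def by simp
  have n1: "cmod z = 1" unfolding z_def using s2 a0 by (simp add: norm_divide)
  have "z - 1 = (V 2 - V 1) / a" unfolding z_def a_def using a0 unfolding a_def
    by (simp add: field_simps)
  then have n2: "cmod (z - 1) = 1" using s1 a0 by (simp add: norm_divide)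
  have q1: "(Re z)^2 + (Im z)^2 = 1" using n1 cmod_power2[of z] by simp
  have q2: "(Re z - 1)^2 + (Im z)^2 = 1" using n2 cmod_power2[of "z - 1"] by simp
  have re: "Re z = 1/2" using q1 q2 by (simp add: power2_eq_square algebra_simps)
  have "(Im z)^2 = 3/4" using q1 unfolding re by (simp add: power2_eq_square)
  then have "(Im z)^2 = (sqrt 3 / 2)^2" by (simp add: power_divide)
  then have "Im z = sqrt 3 / 2 \<or> Im z = - (sqrt 3 / 2)" by (simp add: power2_eq_iff)
  then show ?thesis using re a0 unfolding z_def a_def by blast
qed

lemma equi_approx:
  assumes eq: "equilateral V" and m0: "0 < m" and m1: "m < 1"
  shows "\<exists>w F. folded_ribbon_3stick V w \<and> \<bar>ribbon_Lk V w F\<bar> = 1 \<and> ribbonlength V w = 3 / (m * sqrt 3)"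
proof -
  define a where "a = V 1 - V 0"
  define b where "b = V 0"
  define U where "U = (\<lambda>i. (V i - b) / a)"
  have ez: "a \<noteq> 0 \<and> Re (U 2) = 1/2 \<and> (Im (U 2) = sqrt 3 / 2 \<or> Im (U 2) = - (sqrt 3 / 2))"
    using equi_z[OF eq] unfolding U_def a_def b_def .
  then have a0: "a \<noteq> 0" by blast
  have VU: "V = (\<lambda>i. a * U i + b)" unfolding U_def using a0 by (simp add: fun_eq_iff)
  have u0: "U 0 = Complex 0 0" unfolding U_def b_def by (simp add: complex_eq_iff)
  have u1: "U 1 = Complex 1 0" unfolding U_def b_def a_def using a0 unfolding a_def by (simp add: complex_eq_iff)
  from ez consider (pos) "U 2 = Complex (1/2) (sqrt 3/2)" | (neg) "U 2 = Complex (1/2) (- (sqrt 3/2))"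
    by (metis complex_eq_iff complex.sel(1) complex.sel(2))
  then show ?thesis
  proof cases
    case pos
    have f: "folded_ribbon_3stick V (cmod a * (m * sqrt 3))"
      unfolding VU by (rule folded_aff[OF a0 folded_U[OF u0 u1 pos m0 m1]])
    have l: "ribbon_Lk V (cmod a * (m * sqrt 3)) (\<lambda>i. i = 0) = 1"
      unfolding VU Lk_aff[OF a0] by (rule Lk_U[OF u0 u1 pos m0 m1])
    have r: "ribbonlength V (cmod a * (m * sqrt 3)) = 3 / (m * sqrt 3)"
      unfolding VU riblen_aff[OF a0] by (rule riblen_U[OF u0 u1 pos m0 m1])
    show ?thesis
    proof (intro exI conjI)
      show "folded_ribbon_3stick V (cmod a * (m * sqrt 3))" by (rule f)
      show "\<bar>ribbon_Lk V (cmod a * (m * sqrt 3)) (\<lambda>i. i = 0)\<bar> = 1" using l by simp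
      show "ribbonlength V (cmod a * (m * sqrt 3)) = 3 / (m * sqrt 3)" by (rule r)
    qed
  next
    case neg
    define U' where "U' = (\<lambda>i. cnj (U i))"
    have u0': "U' 0 = Complex 0 0" unfolding U'_def u0 by (simp add: complex_eq_iff)
    have u1': "U' 1 = Complex 1 0" unfolding U'_def u1 by (simp add: complex_eq_iff)
    have u2': "U' 2 = Complex (1/2) (sqrt 3/2)" unfolding U'_def neg by (simp add: complex_eq_iff)
    have VU': "V = (\<lambda>i. a * (\<lambda>i. cnj (U' i)) i + b)" unfolding VU U'_def by simp
    have f: "folded_ribbon_3stick V (cmod a * (m * sqrt 3))"
      unfolding VU' by (rule folded_aff[OF a0 folded_cnj[OF folded_U[OF u0' u1' u2' m0 m1]]])
    have l: "ribbon_Lk V (cmod a * (m * sqrt 3)) (\<lambda>i. i = 0) = -1"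
      unfolding VU' Lk_aff[OF a0] Lk_cnj Lk_U[OF u0' u1' u2' m0 m1] ..
    have r: "ribbonlength V (cmod a * (m * sqrt 3)) = 3 / (m * sqrt 3)"
      unfolding VU' riblen_aff[OF a0] riblen_cnj by (rule riblen_U[OF u0' u1' u2' m0 m1])
    show ?thesis
    proof (intro exI conjI)
      show "folded_ribbon_3stick V (cmod a * (m * sqrt 3))" by (rule f)
      show "\<bar>ribbon_Lk V (cmod a * (m * sqrt 3)) (\<lambda>i. i = 0)\<bar> = 1" using l by simp
      show "ribbonlength V (cmod a * (m * sqrt 3)) = 3 / (m * sqrt 3)" by (rule r)
    qed
  qed
qed

lemma inf_lemma:
  fixes S :: "real set"
  assumes lb: "\<And>x. x \<in> S \<Longrightarrow> c \<le> x" and ap: "\<And>e. e > 0 \<Longrightarrow> \<exists>x\<in>S. x < c + e"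
  shows "Inf S = c"
proof (rule cInf_eq_non_empty)
  show "S \<noteq> {}" using ap[of 1] by auto
  show "\<And>x. x \<in> S \<Longrightarrow> c \<le> x" by (rule lb)
  fix y assume y: "\<And>x. x \<in> S \<Longrightarrow> y \<le> x"
  show "y \<le> c"
  proof (rule ccontr)
    assume "\<not> y \<le> c"
    then obtain x where "x \<in> S" "x < c + (y - c)" using ap[of "y - c"] by auto
    with y show False by force
  qed
qed

lemma approx_m:
  assumes e: "e > 0"
  shows "\<exists>m. 0 < m \<and> m < 1 \<and> 3 / (m * sqrt 3) < sqrt 3 + e"
proof -
  define c where "c = sqrt (3::real)"
  have c: "c > 0" "c * c = 3" unfolding c_def by simp_all
  define m where "m = c / (c + e/2)"
  have "0 < m" unfolding m_def using c e by simp
  moreover have "m < 1" unfolding m_def using c e by simp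
  moreover have "3 / (m * c) = c + e/2"
  proof -
    have "3 / (m * c) = (c * c) / (m * c)" using c(2) by simp
    also have "\<dots> = c / m" using c(1) by simp
    also have "\<dots> = c + e/2" unfolding m_def using c e by (simp add: field_simps)
    finally show ?thesis .
  qed
  ultimately show ?thesis using e unfolding c_def by (intro exI[of _ m]) auto
qed

theorem corollary5p6:
  shows "(\<forall>V w F. folded_ribbon_3stick V w \<and> \<bar>ribbon_Lk V w F\<bar> = 1
            \<longrightarrow> ribbonlength V w \<ge> sqrt 3)
       \<and> Inf {ribbonlength V w | V w F. folded_ribbon_3stick V w \<and> \<bar>ribbon_Lk V w F\<bar> = 1}
           = sqrt 3
       \<and> (\<forall>V. equilateral V \<longrightarrow>
            Inf {ribbonlength V w | w F. folded_ribbon_3stick V w \<and> \<bar>ribbon_Lk V w F\<bar> = 1}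
              = sqrt 3)"
proof (intro conjI allI impI)
  fix V w F
  assume "folded_ribbon_3stick V w \<and> \<bar>ribbon_Lk V w F\<bar> = 1"
  then show "ribbonlength V w \<ge> sqrt 3" using part1 by blast
next
  show "Inf {ribbonlength V w | V w F. folded_ribbon_3stick V w \<and> \<bar>ribbon_Lk V w F\<bar> = 1} = sqrt 3"
  proof (rule inf_lemma)
    fix x assume "x \<in> {ribbonlength V w | V w F. folded_ribbon_3stick V w \<and> \<bar>ribbon_Lk V w F\<bar> = 1}"
    then obtain V w where "x = ribbonlength V w" "folded_ribbon_3stick V w" by blast
    then show "sqrt 3 \<le> x" using part1 by simp
  next
    fix e :: real assume e: "e > 0"
    obtain m where m: "0 < m" "m < 1" "3 / (m * sqrt 3) < sqrt 3 + e" using approx_m[OF e] by blast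
    define Us where "Us = (\<lambda>i::nat. if i = 0 then Complex 0 0 else if i = 1 then Complex 1 0 else Complex (1/2) (sqrt 3/2))"
    have u0: "Us 0 = Complex 0 0" and u1: "Us 1 = Complex 1 0" and u2: "Us 2 = Complex (1/2) (sqrt 3/2)"
      unfolding Us_def by simp_all
    have f: "folded_ribbon_3stick Us (m * sqrt 3)" by (rule folded_U[OF u0 u1 u2 m(1) m(2)])
    have l: "\<bar>ribbon_Lk Us (m * sqrt 3) (\<lambda>i. i = 0)\<bar> = 1" using Lk_U[OF u0 u1 u2 m(1) m(2)] by simp
    have r: "ribbonlength Us (m * sqrt 3) = 3 / (m * sqrt 3)" by (rule riblen_U[OF u0 u1 u2 m(1) m(2)])
    have "ribbonlength Us (m * sqrt 3) \<in> {ribbonlength V w | V w F. folded_ribbon_3stick V w \<and> \<bar>ribbon_Lk V w F\<bar> = 1}"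
      using f l by blast
    then show "\<exists>x\<in>{ribbonlength V w | V w F. folded_ribbon_3stick V w \<and> \<bar>ribbon_Lk V w F\<bar> = 1}. x < sqrt 3 + e"
      using r m(3) by auto
  qed
next
  fix V assume eq: "equilateral V"
  show "Inf {ribbonlength V w | w F. folded_ribbon_3stick V w \<and> \<bar>ribbon_Lk V w F\<bar> = 1} = sqrt 3"
  proof (rule inf_lemma)
    fix x assume "x \<in> {ribbonlength V w | w F. folded_ribbon_3stick V w \<and> \<bar>ribbon_Lk V w F\<bar> = 1}"
    then obtain w where "x = ribbonlength V w" "folded_ribbon_3stick V w" by blast
    then show "sqrt 3 \<le> x" using part1 by simp
  next
    fix e :: real assume e: "e > 0"
    obtain m where m: "0 < m" "m < 1" "3 / (m * sqrt 3) < sqrt 3 + e" using approx_m[OF e] by blast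
    obtain w F where wF: "folded_ribbon_3stick V w" "\<bar>ribbon_Lk V w F\<bar> = 1" "ribbonlength V w = 3 / (m * sqrt 3)"
      using equi_approx[OF eq m(1) m(2)] by blast
    have "ribbonlength V w \<in> {ribbonlength V w | w F. folded_ribbon_3stick V w \<and> \<bar>ribbon_Lk V w F\<bar> = 1}"
      using wF(1) wF(2) by blast
    then show "\<exists>x\<in>{ribbonlength V w | w F. folded_ribbon_3stick V w \<and> \<bar>ribbon_Lk V w F\<bar> = 1}. x < sqrt 3 + e"
      using wF(3) m(3) by auto
  qed
qed

end
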